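(* Let $V$ be a set of $n$ vertices. Suppose each unordered pair of distinct vertices of $V$ is assigned exactly one of: a red color together with a direction, the color blue, the color green, or a purple color together with a direction; suppose there are $2\alpha\binom n2$ red pairs, $\beta\binom n2$ blue pairs, $\gamma\binom n2$ green pairs and $2\delta\binom n2$ purple pairs. Let $T_g$ be the number of $3$-subsets all of whose pairs are green; $T_p$ the number of $3$-subsets $\{x,y,z\}$ all of whose pairs are purple and directed cyclically ($x\to y\to z\to x$ or reverse); and $T_c$ the number of $3$-subsets $\{x,y,z\}$ ("cherries") such that, for some labeling, $\{y,z\}$ is blue and $\{x,y\},\{x,z\}$ are red directed $y\to x$ and $z\to x$. Then: (1) $T_g\le\gamma^{3/2}n^3/6$; (2) $T_p\le2\delta^{3/2}n^3/6$; (3) $T_c\le3\alpha\sqrt\beta\, n^3/6$; (4) $T_c\le0.465\,n^3/6$; (5) $T_p+\tfrac14(T_g+T_c)\le\tfrac14\,n^3/6$; (6) $T_c\le\dfrac{3\alpha\beta}{\alpha+\beta}\,n^3/6$, where $\frac{\alpha\beta}{\alpha+\beta}$ is read as $0$ if $\alpha=\beta=0$. *)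

theory Defs
  imports Complex_Main
begin

datatype colour = Red | Blue | Green | Purple

definition valid_colouring :: "'a set \<Rightarrow> ('a \<Rightarrow> 'a \<Rightarrow> colour) \<Rightarrow> ('a \<Rightarrow> 'a \<Rightarrow> bool) \<Rightarrow> bool" where
  "valid_colouring V col arc \<longleftrightarrow>
     (\<forall>x\<in>V. \<forall>y\<in>V. x \<noteq> y \<longrightarrow>
        col x y = col y x \<and>
        (col x y \<in> {Red, Purple} \<longrightarrow> (arc x y \<longleftrightarrow> \<not> arc y x)))"

definition col_pairs :: "'a set \<Rightarrow> ('a \<Rightarrow> 'a \<Rightarrow> colour) \<Rightarrow> colour \<Rightarrow> 'a set set" where
  "col_pairs V col k = {{x, y} | x y. x \<in> V \<and> y \<in> V \<and> x \<noteq> y \<and> col x y = k}"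

definition green_triangles :: "'a set \<Rightarrow> ('a \<Rightarrow> 'a \<Rightarrow> colour) \<Rightarrow> 'a set set" where
  "green_triangles V col = {S. S \<subseteq> V \<and> card S = 3 \<and>
      (\<forall>x\<in>S. \<forall>y\<in>S. x \<noteq> y \<longrightarrow> col x y = Green)}"

definition purple_cyclic_triangles ::
  "'a set \<Rightarrow> ('a \<Rightarrow> 'a \<Rightarrow> colour) \<Rightarrow> ('a \<Rightarrow> 'a \<Rightarrow> bool) \<Rightarrow> 'a set set" where
  "purple_cyclic_triangles V col arc = {S. S \<subseteq> V \<and> card S = 3 \<and>
      (\<exists>x y z. S = {x, y, z} \<and> x \<noteq> y \<and> y \<noteq> z \<and> x \<noteq> z \<and>
         col x y = Purple \<and> col y z = Purple \<and> col x z = Purple \<and>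
         ((arc x y \<and> arc y z \<and> arc z x) \<or> (arc y x \<and> arc z y \<and> arc x z)))}"

definition cherries ::
  "'a set \<Rightarrow> ('a \<Rightarrow> 'a \<Rightarrow> colour) \<Rightarrow> ('a \<Rightarrow> 'a \<Rightarrow> bool) \<Rightarrow> 'a set set" where
  "cherries V col arc = {S. S \<subseteq> V \<and> card S = 3 \<and>
      (\<exists>x y z. S = {x, y, z} \<and> x \<noteq> y \<and> y \<noteq> z \<and> x \<noteq> z \<and>
         col y z = Blue \<and> col x y = Red \<and> col x z = Red \<and> arc y x \<and> arc z x)}"

end

theory Submission
  imports Defs "HOL-Analysis.Analysis"
begin


definition tset :: "'a \<times> 'a \<times> 'a \<Rightarrow> 'a set" where
  "tset t = (case t of (x, y, z) \<Rightarrow> {x, y, z})"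

lemma fiber_sum:
  assumes fin: "finite V" and FV: "F \<subseteq> Pow V" and nn: "\<forall>t\<in>V\<times>V\<times>V. 0 \<le> (h t :: real)"
  shows "(\<Sum>S\<in>F. \<Sum>t\<in>{t\<in>V\<times>V\<times>V. tset t = S}. h t) \<le> (\<Sum>t\<in>V\<times>V\<times>V. h t)"
proof -
  let ?A = "{t\<in>V\<times>V\<times>V. tset t \<in> F}"
  have fF: "finite F" using fin FV by (meson finite_Pow_iff rev_finite_subset)
  have fA: "finite ?A" using fin by simp
  have "(\<Sum>S\<in>F. \<Sum>t\<in>{t\<in>?A. tset t = S}. h t) = (\<Sum>t\<in>?A. h t)"
    by (rule sum.group[OF fA fF]) auto
  moreover have "(\<Sum>S\<in>F. \<Sum>t\<in>{t\<in>?A. tset t = S}. h t) = (\<Sum>S\<in>F. \<Sum>t\<in>{t\<in>V\<times>V\<times>V. tset t = S}. h t)"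
    by (rule sum.cong) (auto intro!: sum.cong)
  moreover have "(\<Sum>t\<in>?A. h t) \<le> (\<Sum>t\<in>V\<times>V\<times>V. h t)"
    by (rule sum_mono2) (use fin nn in auto)
  ultimately show ?thesis by simp
qed

lemma fiber6:
  assumes fin: "finite V" and nn: "\<forall>t\<in>V\<times>V\<times>V. 0 \<le> (h t :: real)"
    and xyz: "x \<in> V" "y \<in> V" "z \<in> V" "x \<noteq> y" "y \<noteq> z" "x \<noteq> z"
  shows "h (x,y,z) + h (x,z,y) + h (y,x,z) + h (y,z,x) + h (z,x,y) + h (z,y,x)
      \<le> (\<Sum>t\<in>{t\<in>V\<times>V\<times>V. tset t = {x,y,z}}. h t)"
proof -
  let ?Q = "{(x,y,z),(x,z,y),(y,x,z),(y,z,x),(z,x,y),(z,y,x)}"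
  have "(\<Sum>t\<in>?Q. h t) = h (x,y,z) + h (x,z,y) + h (y,x,z) + h (y,z,x) + h (z,x,y) + h (z,y,x)"
    using xyz by (simp add: add.assoc)
  moreover have "(\<Sum>t\<in>?Q. h t) \<le> (\<Sum>t\<in>{t\<in>V\<times>V\<times>V. tset t = {x,y,z}}. h t)"
    by (rule sum_mono2) (use fin nn xyz in \<open>auto simp: tset_def\<close>)
  ultimately show ?thesis by simp
qed

lemma pair_count:
  assumes fin: "finite V" and sym: "\<forall>x\<in>V. \<forall>y\<in>V. P x y = P y x"
  shows "(\<Sum>x\<in>V. \<Sum>y\<in>V. if x \<noteq> y \<and> P x y then 1 else 0 :: real)
         = 2 * real (card {{x, y} | x y. x \<in> V \<and> y \<in> V \<and> x \<noteq> y \<and> P x y})"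
proof -
  let ?A = "{p\<in>V\<times>V. fst p \<noteq> snd p \<and> P (fst p) (snd p)}"
  let ?B = "{{x, y} | x y. x \<in> V \<and> y \<in> V \<and> x \<noteq> y \<and> P x y}"
  have fA: "finite ?A" using fin by simp
  have fB: "finite ?B"
  proof (rule rev_finite_subset[of "Pow V"])
    show "finite (Pow V)" using fin by simp
  qed auto
  have "(\<Sum>x\<in>V. \<Sum>y\<in>V. if x \<noteq> y \<and> P x y then 1 else 0 :: real)
      = (\<Sum>p\<in>V\<times>V. if fst p \<noteq> snd p \<and> P (fst p) (snd p) then 1 else 0)"
    by (simp add: sum.cartesian_product split_def)
  also have "\<dots> = (\<Sum>p\<in>?A. 1)"
    by (rule sum.inter_filter[symmetric]) (use fin in simp)
  also have "\<dots> = (\<Sum>S\<in>?B. \<Sum>p\<in>{p\<in>?A. (\<lambda>(x,y). {x,y}) p = S}. 1)"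
  proof (rule sum.group[symmetric, OF fA fB])
    show "(\<lambda>(x,y). {x,y}) ` ?A \<subseteq> ?B"
    proof
      fix S assume "S \<in> (\<lambda>(x,y). {x,y}) ` ?A"
      then obtain a b where ab: "(a,b) \<in> ?A" "S = {a,b}" by auto
      show "S \<in> ?B"
        apply (rule CollectI, rule exI[of _ a], rule exI[of _ b])
        using ab by auto
    qed
  qed
  also have "\<dots> = (\<Sum>S\<in>?B. 2)"
  proof (rule sum.cong)
    fix S assume "S \<in> ?B"
    then obtain a b where S: "S = {a,b}" "a \<in> V" "b \<in> V" "a \<noteq> b" "P a b" by blast
    have Pba: "P b a" using sym S by blast
    have "{p\<in>?A. (\<lambda>(x,y). {x,y}) p = S} = {(a,b),(b,a)}"
      using S Pba by (auto simp: doubleton_eq_iff)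
    then show "(\<Sum>p\<in>{p\<in>?A. (\<lambda>(x,y). {x,y}) p = S}. 1) = (2::real)"
      using S by simp
  qed simp
  finally show ?thesis by simp
qed




lemma cs_sqrt:
  fixes a b :: "'b \<Rightarrow> real"
  shows "(\<Sum>i\<in>I. a i * b i) \<le> sqrt (\<Sum>i\<in>I. (a i)\<^sup>2) * sqrt (\<Sum>i\<in>I. (b i)\<^sup>2)"
proof -
  have "(\<Sum>i\<in>I. a i * b i) \<le> sqrt ((\<Sum>i\<in>I. a i * b i)\<^sup>2)" by simp
  also have "\<dots> \<le> sqrt ((\<Sum>i\<in>I. (a i)\<^sup>2) * (\<Sum>i\<in>I. (b i)\<^sup>2))"
    by (rule real_sqrt_le_mono, rule Cauchy_Schwarz_ineq_sum)
  also have "\<dots> = sqrt (\<Sum>i\<in>I. (a i)\<^sup>2) * sqrt (\<Sum>i\<in>I. (b i)\<^sup>2)"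
    by (simp add: real_sqrt_mult)
  finally show ?thesis .
qed

lemma tri_cs:
  fixes B X Y :: "'a \<Rightarrow> 'a \<Rightarrow> real"
  assumes fin: "finite V"
  shows "(\<Sum>u\<in>V. \<Sum>v\<in>V. B u v * (\<Sum>w\<in>V. X u w * Y w v))
    \<le> sqrt (\<Sum>u\<in>V. \<Sum>v\<in>V. (B u v)\<^sup>2) * sqrt (\<Sum>u\<in>V. \<Sum>w\<in>V. (X u w)\<^sup>2)
       * sqrt (\<Sum>w\<in>V. \<Sum>v\<in>V. (Y w v)\<^sup>2)"
proof -
  define C where "C u v = (\<Sum>w\<in>V. X u w * Y w v)" for u v
  define SB where "SB = (\<Sum>u\<in>V. \<Sum>v\<in>V. (B u v)\<^sup>2)"
  define SX where "SX = (\<Sum>u\<in>V. \<Sum>w\<in>V. (X u w)\<^sup>2)"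
  define SY where "SY = (\<Sum>w\<in>V. \<Sum>v\<in>V. (Y w v)\<^sup>2)"
  define SC where "SC = (\<Sum>u\<in>V. \<Sum>v\<in>V. (C u v)\<^sup>2)"
  have 1: "(\<Sum>u\<in>V. \<Sum>v\<in>V. B u v * C u v) \<le> sqrt SB * sqrt SC"
  proof -
    have "(\<Sum>u\<in>V. \<Sum>v\<in>V. B u v * C u v) = (\<Sum>p\<in>V\<times>V. B (fst p) (snd p) * C (fst p) (snd p))"
      by (simp add: sum.cartesian_product split_def)
    also have "\<dots> \<le> sqrt (\<Sum>p\<in>V\<times>V. (B (fst p) (snd p))\<^sup>2) * sqrt (\<Sum>p\<in>V\<times>V. (C (fst p) (snd p))\<^sup>2)"
      by (rule cs_sqrt)
    also have "(\<Sum>p\<in>V\<times>V. (B (fst p) (snd p))\<^sup>2) = SB"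
      unfolding SB_def by (simp add: sum.cartesian_product split_def)
    also have "(\<Sum>p\<in>V\<times>V. (C (fst p) (snd p))\<^sup>2) = SC"
      unfolding SC_def by (simp add: sum.cartesian_product split_def)
    finally show ?thesis .
  qed
  have 2: "SC \<le> SX * SY"
  proof -
    have "SC \<le> (\<Sum>u\<in>V. \<Sum>v\<in>V. (\<Sum>w\<in>V. (X u w)\<^sup>2) * (\<Sum>w\<in>V. (Y w v)\<^sup>2))"
      unfolding SC_def C_def by (intro sum_mono Cauchy_Schwarz_ineq_sum)
    also have "\<dots> = SX * (\<Sum>v\<in>V. \<Sum>w\<in>V. (Y w v)\<^sup>2)"
      unfolding SX_def by (simp add: sum_product)
    also have "(\<Sum>v\<in>V. \<Sum>w\<in>V. (Y w v)\<^sup>2) = SY"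
      unfolding SY_def by (rule sum.swap)
    finally show ?thesis .
  qed
  have 3: "sqrt SC \<le> sqrt SX * sqrt SY"
    using 2 by (metis real_sqrt_le_mono real_sqrt_mult)
  have "sqrt SB * sqrt SC \<le> sqrt SB * (sqrt SX * sqrt SY)"
    by (rule mult_left_mono[OF 3]) (simp add: SB_def sum_nonneg)
  with 1 show ?thesis unfolding C_def SB_def SX_def SY_def by (simp add: mult.assoc)
qed

definition hm :: "real \<Rightarrow> real \<Rightarrow> real" where
  "hm a b = (if a + b = 0 then 0 else a * b / (a + b))"

lemma hm_nonneg: "0 \<le> a \<Longrightarrow> 0 \<le> b \<Longrightarrow> 0 \<le> hm a b"
  by (simp add: hm_def)

lemma hm_super:
  assumes "0 \<le> a" "0 \<le> b" "0 \<le> c" "0 \<le> d"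
  shows "hm a b + hm c d \<le> hm (a + c) (b + d)"
proof (cases "a + b = 0 \<or> c + d = 0")
  case True
  then show ?thesis using assms by (auto simp: hm_def add_nonneg_eq_0_iff)
next
  case False
  then have p1: "a + b > 0" "c + d > 0" using assms by auto
  define X where "X = a*b*(c+d) + c*d*(a+b)"
  define Y where "Y = (a+c)*(b+d)"
  define P where "P = (a+b)*(c+d)"
  define Q where "Q = a+c+(b+d)"
  have key: "Y * P - X * Q = (a*d - b*c)\<^sup>2"
    unfolding X_def Y_def P_def Q_def by (simp add: power2_eq_square algebra_simps)
  have XQ: "X * Q \<le> Y * P" using key zero_le_power2[of "a*d-b*c"] by linarith
  have Pp: "P > 0" and Qp: "Q > 0" using p1 unfolding P_def Q_def by auto
  have "X / P = (X * Q) / (P * Q)" using Qp by simp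
  also have "\<dots> \<le> (Y * P) / (P * Q)"
    by (rule divide_right_mono[OF XQ]) (use Pp Qp in simp)
  also have "\<dots> = Y / Q" using Pp by simp
  finally have XY: "X / P \<le> Y / Q" .
  have "a*b/(a+b) + c*d/(c+d) = X / P"
    using p1 unfolding X_def P_def by (simp add: field_simps)
  with XY have "a*b/(a+b) + c*d/(c+d) \<le> (a+c)*(b+d)/(a+c+(b+d))"
    unfolding Y_def Q_def by simp
  then show ?thesis using p1 False by (simp add: hm_def)
qed

lemma hm_sum:
  assumes "finite I" "\<forall>i\<in>I. 0 \<le> a i \<and> 0 \<le> b i"
  shows "(\<Sum>i\<in>I. hm (a i) (b i)) \<le> hm (\<Sum>i\<in>I. a i) (\<Sum>i\<in>I. b i)"
  using assms
proof (induction I rule: finite_induct)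
  case empty
  then show ?case by (simp add: hm_def)
next
  case (insert x F)
  have "(\<Sum>i\<in>insert x F. hm (a i) (b i)) = hm (a x) (b x) + (\<Sum>i\<in>F. hm (a i) (b i))"
    using insert by simp
  also have "\<dots> \<le> hm (a x) (b x) + hm (\<Sum>i\<in>F. a i) (\<Sum>i\<in>F. b i)"
    using insert by simp
  also have "\<dots> \<le> hm (a x + (\<Sum>i\<in>F. a i)) (b x + (\<Sum>i\<in>F. b i))"
    by (rule hm_super) (use insert in \<open>auto intro: sum_nonneg\<close>)
  finally show ?case using insert by simp
qed

lemma hm_mul: "0 < k \<Longrightarrow> hm (k * a) (k * b) = k * hm a b"
proof -
  assume k: "0 < k"
  have e: "k * a + k * b = k * (a + b)" by (simp add: algebra_simps)
  show ?thesis
  proof (cases "a + b = 0")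
    case True then show ?thesis using e by (simp add: hm_def)
  next
    case False
    have "k * a * (k * b) / (k * (a + b)) = (k * (k * (a * b))) / (k * (a + b))"
      by (simp add: ac_simps)
    also have "\<dots> = k * (a * b) / (a + b)"
      using k by (rule_tac mult_divide_mult_cancel_left) simp
    also have "\<dots> = k * (a * b / (a + b))" by simp
    finally have "k * a * (k * b) / (k * (a + b)) = k * (a * b / (a + b))" .
    then show ?thesis using e False k by (simp add: hm_def)
  qed
qed

lemma hm_bound:
  assumes "0 \<le> a" "0 \<le> b" "a + b \<le> n"
  shows "a * b \<le> n * hm a b"
proof (cases "a + b = 0")
  case True
  then have "a = 0" using assms by linarith
  then show ?thesis using assms by (simp add: hm_def)
next
  case False
  then have p: "a + b > 0" using assms by simp
  have "a * b = (a + b) * (a * b / (a + b))" using p by simp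
  also have "\<dots> \<le> n * (a * b / (a + b))"
    by (rule mult_right_mono) (use assms p in auto)
  finally show ?thesis using False by (simp add: hm_def)
qed

lemma sum3: "(\<Sum>t\<in>V\<times>V\<times>V. h t) = (\<Sum>x\<in>V. \<Sum>y\<in>V. \<Sum>z\<in>V. h (x, y, z))"
  by (simp add: sum.cartesian_product split_def)




lemma rot3: "(\<Sum>x\<in>V. \<Sum>y\<in>V. \<Sum>z\<in>V. f x y z) = (\<Sum>x\<in>V. \<Sum>y\<in>V. \<Sum>z\<in>V. f y z x)"
proof -
  have "(\<Sum>x\<in>V. \<Sum>y\<in>V. \<Sum>z\<in>V. f y z x) = (\<Sum>y\<in>V. \<Sum>x\<in>V. \<Sum>z\<in>V. f y z x)"
    by (rule sum.swap)
  also have "\<dots> = (\<Sum>y\<in>V. \<Sum>z\<in>V. \<Sum>x\<in>V. f y z x)"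
    by (rule sum.cong[OF refl], rule sum.swap)
  finally show ?thesis by simp
qed

lemma quad_bound:
  fixes \<phi> :: "'a \<Rightarrow> 'a \<Rightarrow> real"
  assumes fin: "finite V" and d0: "\<forall>x. \<phi> x x = 0" and b1: "\<forall>x y. (\<phi> x y)\<^sup>2 \<le> 1"
  shows "-3 * (real (card V) * (real (card V) - 1)) \<le> (\<Sum>x\<in>V. \<Sum>y\<in>V. \<Sum>z\<in>V.
     if x \<noteq> y \<and> y \<noteq> z \<and> x \<noteq> z then \<phi> x y * \<phi> x z + \<phi> y x * \<phi> y z + \<phi> z x * \<phi> z y else 0)"
proof -
  define P where "P x y z \<longleftrightarrow> x \<noteq> y \<and> y \<noteq> z \<and> x \<noteq> z" for x y z :: 'a
  define K where "K = (\<Sum>x\<in>V. \<Sum>y\<in>V. \<Sum>z\<in>V. if P x y z then \<phi> x y * \<phi> x z else 0)"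
  have pw: "(if P x y z then \<phi> x y * \<phi> x z + \<phi> y x * \<phi> y z + \<phi> z x * \<phi> z y else 0)
     = (if P x y z then \<phi> x y * \<phi> x z else 0) + (if P x y z then \<phi> y x * \<phi> y z else 0)
       + (if P x y z then \<phi> z x * \<phi> z y else 0)" for x y z by simp
  have tot: "(\<Sum>x\<in>V. \<Sum>y\<in>V. \<Sum>z\<in>V. if P x y z then \<phi> x y * \<phi> x z + \<phi> y x * \<phi> y z + \<phi> z x * \<phi> z y else 0)
     = K + (\<Sum>x\<in>V. \<Sum>y\<in>V. \<Sum>z\<in>V. if P x y z then \<phi> y x * \<phi> y z else 0)
         + (\<Sum>x\<in>V. \<Sum>y\<in>V. \<Sum>z\<in>V. if P x y z then \<phi> z x * \<phi> z y else 0)"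
    unfolding K_def pw by (simp add: sum.distrib)
  have Kb: "(\<Sum>x\<in>V. \<Sum>y\<in>V. \<Sum>z\<in>V. if P x y z then \<phi> y x * \<phi> y z else 0) = K"
  proof -
    have "(\<Sum>x\<in>V. \<Sum>y\<in>V. \<Sum>z\<in>V. if P x y z then \<phi> y x * \<phi> y z else 0)
        = (\<Sum>x\<in>V. \<Sum>y\<in>V. \<Sum>z\<in>V. if P y x z then \<phi> x y * \<phi> x z else 0)"
      by (rule sum.swap)
    also have "\<dots> = K" unfolding K_def P_def by (intro sum.cong refl) auto
    finally show ?thesis .
  qed
  have Kc: "(\<Sum>x\<in>V. \<Sum>y\<in>V. \<Sum>z\<in>V. if P x y z then \<phi> z x * \<phi> z y else 0) = K"
  proof -
    have "(\<Sum>x\<in>V. \<Sum>y\<in>V. \<Sum>z\<in>V. if P x y z then \<phi> z x * \<phi> z y else 0)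
        = (\<Sum>x\<in>V. \<Sum>y\<in>V. \<Sum>z\<in>V. if P y z x then \<phi> x y * \<phi> x z else 0)"
      by (rule rot3)
    also have "\<dots> = K" unfolding K_def P_def by (intro sum.cong refl) auto
    finally show ?thesis .
  qed
  have px: "-(real (card V) - 1) \<le> (\<Sum>y\<in>V. \<Sum>z\<in>V. if P x y z then \<phi> x y * \<phi> x z else 0)"
    if xV: "x \<in> V" for x
  proof -
    have e1: "(if P x y z then \<phi> x y * \<phi> x z else 0) = \<phi> x y * \<phi> x z - (if y = z then \<phi> x y * \<phi> x z else 0)"
      for y z using d0 unfolding P_def by auto
    have e2: "(\<Sum>z\<in>V. if y = z then \<phi> x y * \<phi> x z else 0) = \<phi> x y * \<phi> x y" if "y \<in> V" for y
      using that fin by (simp add: sum.delta)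
    have "(\<Sum>y\<in>V. \<Sum>z\<in>V. if P x y z then \<phi> x y * \<phi> x z else 0)
        = (\<Sum>y\<in>V. (\<Sum>z\<in>V. \<phi> x y * \<phi> x z) - \<phi> x y * \<phi> x y)"
      unfolding e1 by (intro sum.cong refl) (simp add: sum_subtractf e2)
    also have "\<dots> = (\<Sum>y\<in>V. \<phi> x y) * (\<Sum>z\<in>V. \<phi> x z) - (\<Sum>y\<in>V. (\<phi> x y)\<^sup>2)"
      by (simp add: sum_subtractf sum_product power2_eq_square)
    finally have eq: "(\<Sum>y\<in>V. \<Sum>z\<in>V. if P x y z then \<phi> x y * \<phi> x z else 0)
        = (\<Sum>y\<in>V. \<phi> x y)\<^sup>2 - (\<Sum>y\<in>V. (\<phi> x y)\<^sup>2)" by (simp add: power2_eq_square)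
    have "(\<Sum>y\<in>V. (\<phi> x y)\<^sup>2) = (\<phi> x x)\<^sup>2 + (\<Sum>y\<in>V-{x}. (\<phi> x y)\<^sup>2)"
      using fin xV by (simp add: sum.remove)
    also have "\<dots> = (\<Sum>y\<in>V-{x}. (\<phi> x y)\<^sup>2)" using d0 by simp
    also have "\<dots> \<le> (\<Sum>y\<in>V-{x}. 1)" by (rule sum_mono) (use b1 in auto)
    also have "\<dots> = real (card V) - 1"
    proof -
      have c1: "card V \<ge> 1" using fin xV by (metis card_0_eq empty_iff less_one not_le)
      then show ?thesis using fin xV by (simp add: card_Diff_singleton of_nat_diff)
    qed
    finally have "(\<Sum>y\<in>V. (\<phi> x y)\<^sup>2) \<le> real (card V) - 1" .
    then show ?thesis unfolding eq using zero_le_power2[of "\<Sum>y\<in>V. \<phi> x y"] by linarith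
  qed
  have "(\<Sum>x\<in>V. -(real (card V) - 1)) \<le> K" unfolding K_def by (rule sum_mono) (rule px)
  then have "-(real (card V) * (real (card V) - 1)) \<le> K" by (simp add: algebra_simps)
  then show ?thesis using tot Kb Kc unfolding P_def by linarith
qed

lemma count3:
  assumes fin: "finite V"
  shows "(\<Sum>x\<in>V. \<Sum>y\<in>V. \<Sum>z\<in>V. if x \<noteq> y \<and> y \<noteq> z \<and> x \<noteq> z then 1 else 0 :: real)
    = real (card V) * (real (card V) - 1) * (real (card V) - 2)"
proof -
  have inner: "(\<Sum>z\<in>V. if x \<noteq> y \<and> y \<noteq> z \<and> x \<noteq> z then 1 else 0 :: real)
      = (if x \<noteq> y then real (card V) - 2 else 0)" if "x \<in> V" "y \<in> V" for x y
  proof (cases "x = y")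
    case True then show ?thesis by simp
  next
    case False
    have "(\<Sum>z\<in>V. if x \<noteq> y \<and> y \<noteq> z \<and> x \<noteq> z then 1 else 0 :: real)
       = (\<Sum>z\<in>V. 1 - (if z = x then 1 else 0) - (if z = y then 1 else 0))"
      using False by (intro sum.cong refl) auto
    also have "\<dots> = real (card V) - 2"
      using that fin by (simp add: sum_subtractf sum.delta)
    finally show ?thesis using False by simp
  qed
  have mid: "(\<Sum>y\<in>V. if x \<noteq> y then real (card V) - 2 else 0) = (real (card V) - 1) * (real (card V) - 2)"
    if "x \<in> V" for x
  proof -
    have "(\<Sum>y\<in>V. if x \<noteq> y then real (card V) - 2 else 0)
       = (\<Sum>y\<in>V. (real (card V) - 2) - (if y = x then real (card V) - 2 else 0))"
      by (intro sum.cong refl) auto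
    also have "\<dots> = (\<Sum>y\<in>V. (real (card V) - 2)) - (\<Sum>y\<in>V. if y = x then real (card V) - 2 else 0)"
      by (rule sum_subtractf)
    also have "\<dots> = real (card V) * (real (card V) - 2) - (real (card V) - 2)"
      using that fin by (simp add: sum.delta)
    also have "\<dots> = (real (card V) - 1) * (real (card V) - 2)" by (simp add: algebra_simps)
    finally show ?thesis .
  qed
  have "(\<Sum>x\<in>V. \<Sum>y\<in>V. \<Sum>z\<in>V. if x \<noteq> y \<and> y \<noteq> z \<and> x \<noteq> z then 1 else 0 :: real)
     = (\<Sum>x\<in>V. \<Sum>y\<in>V. if x \<noteq> y then real (card V) - 2 else 0)"
    by (intro sum.cong refl) (simp add: inner)
  also have "\<dots> = (\<Sum>x\<in>V. (real (card V) - 1) * (real (card V) - 2))"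
    by (intro sum.cong refl) (simp add: mid)
  finally show ?thesis by simp
qed

lemma cfg5:
  fixes a1 a2 b1 b2 c1 c2 :: real
  assumes "a2 = - a1" "b2 = - b1" "c2 = - c1"
    "a1 \<in> {-1, 0, 1}" "b1 \<in> {-1, 0, 1}" "c1 \<in> {-1, 0, 1}"
  shows "a1 * c1 + a2 * b1 + c2 * b2 \<le> 1"
  using assms by auto

definition pok :: "real \<Rightarrow> real \<Rightarrow> bool" where
  "pok u v \<longleftrightarrow> (u = 1 \<and> v = 0) \<or> (u = 0 \<and> v = 1) \<or> (u = - (72/125) \<and> v = - (72/125)) \<or> (u = 0 \<and> v = 0)"

lemma cfg4:
  fixes a1 a2 b1 b2 c1 c2 :: real
  assumes "pok a1 a2" "pok b1 b2" "pok c1 c2"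
  shows "a1 * c1 + a2 * b1 + c2 * b2 \<le> 1"
  using assms unfolding pok_def by auto




definition ind :: "bool \<Rightarrow> real" where "ind b = (if b then 1 else 0)"

lemma ind_nonneg[simp]: "0 \<le> ind b" by (simp add: ind_def)
lemma ind_le1[simp]: "ind b \<le> 1" by (simp add: ind_def)
lemma ind_sq[simp]: "(ind b)\<^sup>2 = ind b" by (simp add: ind_def)

lemma valid_sym:
  assumes "valid_colouring V col ar" "x \<in> V" "y \<in> V"
  shows "col y x = col x y"
  using assms unfolding valid_colouring_def by (cases "x = y") auto

lemma valid_arc:
  assumes "valid_colouring V col ar" "x \<in> V" "y \<in> V" "x \<noteq> y" "col x y = Red \<or> col x y = Purple"
  shows "ar x y \<longleftrightarrow> \<not> ar y x"
  using assms unfolding valid_colouring_def by auto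

lemma cnt_col:
  assumes fin: "finite V" and valid: "valid_colouring V col ar"
  shows "(\<Sum>x\<in>V. \<Sum>y\<in>V. ind (x \<noteq> y \<and> col x y = k)) = 2 * real (card (col_pairs V col k))"
proof -
  have "(\<Sum>x\<in>V. \<Sum>y\<in>V. ind (x \<noteq> y \<and> col x y = k)) = (\<Sum>x\<in>V. \<Sum>y\<in>V. if x \<noteq> y \<and> col x y = k then 1 else 0)"
    by (simp add: ind_def)
  also have "\<dots> = 2 * real (card {{x, y} | x y. x \<in> V \<and> y \<in> V \<and> x \<noteq> y \<and> col x y = k})"
    by (rule pair_count[OF fin]) (use valid_sym[OF valid] in auto)
  finally show ?thesis unfolding col_pairs_def .
qed

lemma cnt_or:
  assumes fin: "finite V" and valid: "valid_colouring V col ar" and k: "k = Red \<or> k = Purple"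
  shows "(\<Sum>x\<in>V. \<Sum>y\<in>V. ind (x \<noteq> y \<and> col x y = k \<and> ar x y)) = real (card (col_pairs V col k))"
proof -
  define S where "S = (\<Sum>x\<in>V. \<Sum>y\<in>V. ind (x \<noteq> y \<and> col x y = k \<and> ar x y))"
  have pw: "ind (x \<noteq> y \<and> col x y = k) = ind (x \<noteq> y \<and> col x y = k \<and> ar x y) + ind (y \<noteq> x \<and> col y x = k \<and> ar y x)"
    if "x \<in> V" "y \<in> V" for x y
  proof (cases "x \<noteq> y \<and> col x y = k")
    case True
    then have "col y x = k" using valid_sym[OF valid that] by simp
    moreover have "ar x y \<longleftrightarrow> \<not> ar y x" using valid_arc[OF valid that] True k by auto
    ultimately show ?thesis using True by (auto simp: ind_def)
  next
    case False
    then show ?thesis using valid_sym[OF valid that] by (auto simp: ind_def)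
  qed
  have "(\<Sum>x\<in>V. \<Sum>y\<in>V. ind (x \<noteq> y \<and> col x y = k))
     = S + (\<Sum>x\<in>V. \<Sum>y\<in>V. ind (y \<noteq> x \<and> col y x = k \<and> ar y x))"
    unfolding S_def by (simp add: pw sum.distrib)
  also have "(\<Sum>x\<in>V. \<Sum>y\<in>V. ind (y \<noteq> x \<and> col y x = k \<and> ar y x)) = S"
    unfolding S_def by (rule sum.swap)
  finally have "2 * real (card (col_pairs V col k)) = 2 * S"
    using cnt_col[OF fin valid] by simp
  then show ?thesis unfolding S_def by simp
qed

lemma powr32: "0 \<le> g \<Longrightarrow> g powr (3/2) = g * sqrt g"
proof -
  assume g: "0 \<le> g"
  show ?thesis
  proof (cases "g = 0")
    case True then show ?thesis by simp
  next
    case False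
    have "g powr (3/2) = g * g powr (1/2)" using powr_add[of g 1 "1/2"] False g by simp
    also have "\<dots> = g * sqrt g" using g by (simp add: powr_half_sqrt)
    finally show ?thesis .
  qed
qed

lemma final_bound:
  fixes a n :: real
  assumes a: "0 \<le> a" and n: "1 \<le> n"
  shows "(a * (n * (n - 1))) * sqrt (a * (n * (n - 1))) \<le> a * sqrt a * n ^ 3"
proof -
  define m where "m = n * (n - 1)"
  have m0: "0 \<le> m" using n unfolding m_def by simp
  have mn: "m \<le> n\<^sup>2" using n unfolding m_def by (simp add: power2_eq_square right_diff_distrib)
  have "sqrt m \<le> sqrt (n\<^sup>2)" by (rule real_sqrt_le_mono[OF mn])
  then have sm: "sqrt m \<le> n" using n by simp
  have A: "(a * m) * sqrt (a * m) = (a * sqrt a) * (m * sqrt m)" by (simp add: real_sqrt_mult ac_simps)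
  have B: "m * sqrt m \<le> n\<^sup>2 * n"
    by (rule mult_mono[OF mn sm]) (use m0 in auto)
  have C: "(a * sqrt a) * (m * sqrt m) \<le> (a * sqrt a) * (n\<^sup>2 * n)"
    using B by (rule mult_left_mono) (use a in simp)
  have D: "(a * sqrt a) * (n\<^sup>2 * n) = a * sqrt a * n ^ 3" by (simp add: power2_eq_square power3_eq_cube)
  show ?thesis using A C D unfolding m_def by linarith
qed




definition gr :: "('a \<Rightarrow> 'a \<Rightarrow> colour) \<Rightarrow> 'a \<Rightarrow> 'a \<Rightarrow> real" where
  "gr col x y = ind (x \<noteq> y \<and> col x y = Green)"
definition bl :: "('a \<Rightarrow> 'a \<Rightarrow> colour) \<Rightarrow> 'a \<Rightarrow> 'a \<Rightarrow> real" where
  "bl col x y = ind (x \<noteq> y \<and> col x y = Blue)"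
definition rd :: "('a \<Rightarrow> 'a \<Rightarrow> colour) \<Rightarrow> ('a \<Rightarrow> 'a \<Rightarrow> bool) \<Rightarrow> 'a \<Rightarrow> 'a \<Rightarrow> real" where
  "rd col ar x y = ind (x \<noteq> y \<and> col x y = Red \<and> ar x y)"
definition pu :: "('a \<Rightarrow> 'a \<Rightarrow> colour) \<Rightarrow> ('a \<Rightarrow> 'a \<Rightarrow> bool) \<Rightarrow> 'a \<Rightarrow> 'a \<Rightarrow> real" where
  "pu col ar x y = ind (x \<noteq> y \<and> col x y = Purple \<and> ar x y)"

lemma choose2_real: "real (n choose 2) = real n * (real n - 1) / 2"
proof (induction n)
  case 0 then show ?case by simp
next
  case (Suc n)
  have "Suc n choose 2 = (n choose 1) + (n choose 2)"
    using binomial_Suc_Suc[of n 1] by (simp add: numeral_2_eq_2)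
  then show ?case using Suc by (simp add: field_simps)
qed

lemma part1:
  fixes V :: "'a set" and col :: "'a \<Rightarrow> 'a \<Rightarrow> colour" and ar :: "'a \<Rightarrow> 'a \<Rightarrow> bool" and \<gamma> :: real
  assumes fin: "finite V" and n2: "card V \<ge> 2" and valid: "valid_colouring V col ar"
    and green: "real (card (col_pairs V col Green)) = \<gamma> * real (card V choose 2)"
  shows "real (card (green_triangles V col)) \<le> \<gamma> powr (3/2) * real (card V) ^ 3 / 6"
proof -
  define g where "g = gr col"
  define h where "h = (\<lambda>(x,y,z). g x y * g y z * g z x)"
  have hnn: "\<forall>t\<in>V\<times>V\<times>V. 0 \<le> h t" by (auto simp: h_def g_def gr_def)
  have FV: "green_triangles V col \<subseteq> Pow V" by (auto simp: green_triangles_def)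
  have fib: "6 \<le> (\<Sum>t\<in>{t\<in>V\<times>V\<times>V. tset t = S}. h t)" if "S \<in> green_triangles V col" for S
  proof -
    from that have S: "S \<subseteq> V" "card S = 3" "\<forall>x\<in>S. \<forall>y\<in>S. x \<noteq> y \<longrightarrow> col x y = Green"
      by (auto simp: green_triangles_def)
    then obtain x y z where xyz: "S = {x,y,z}" "x \<noteq> y" "y \<noteq> z" "x \<noteq> z" by (auto simp: card_3_iff)
    have V: "x \<in> V" "y \<in> V" "z \<in> V" using S xyz by auto
    have gg: "g x y = 1" "g y x = 1" "g y z = 1" "g z y = 1" "g x z = 1" "g z x = 1"
      using S(3) xyz by (auto simp: g_def gr_def ind_def)
    have "h (x,y,z) + h (x,z,y) + h (y,x,z) + h (y,z,x) + h (z,x,y) + h (z,y,x)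
        \<le> (\<Sum>t\<in>{t\<in>V\<times>V\<times>V. tset t = {x,y,z}}. h t)"
      by (rule fiber6[OF fin hnn V xyz(2-4)])
    moreover have "h (x,y,z) + h (x,z,y) + h (y,x,z) + h (y,z,x) + h (z,x,y) + h (z,y,x) = 6"
      using gg by (simp add: h_def)
    ultimately show ?thesis using xyz by simp
  qed
  define G where "G = (\<Sum>x\<in>V. \<Sum>y\<in>V. g x y)"
  have G: "G = \<gamma> * (real (card V) * (real (card V) - 1))"
    using cnt_col[OF fin valid, of Green] green unfolding G_def g_def gr_def
    by (simp add: choose2_real)
  have "6 * real (card (green_triangles V col)) = (\<Sum>S\<in>green_triangles V col. 6)" by simp
  also have "\<dots> \<le> (\<Sum>S\<in>green_triangles V col. \<Sum>t\<in>{t\<in>V\<times>V\<times>V. tset t = S}. h t)"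
    by (rule sum_mono) (rule fib)
  also have "\<dots> \<le> (\<Sum>t\<in>V\<times>V\<times>V. h t)" by (rule fiber_sum[OF fin FV hnn])
  also have "\<dots> = (\<Sum>x\<in>V. \<Sum>y\<in>V. \<Sum>z\<in>V. g x y * g y z * g z x)" by (simp add: sum3 h_def)
  also have "\<dots> = (\<Sum>x\<in>V. \<Sum>z\<in>V. g z x * (\<Sum>y\<in>V. g x y * g y z))"
  proof (rule sum.cong[OF refl])
    fix x assume "x \<in> V"
    have "(\<Sum>y\<in>V. \<Sum>z\<in>V. g x y * g y z * g z x) = (\<Sum>z\<in>V. \<Sum>y\<in>V. g x y * g y z * g z x)"
      by (rule sum.swap)
    also have "\<dots> = (\<Sum>z\<in>V. g z x * (\<Sum>y\<in>V. g x y * g y z))"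
      by (simp add: sum_distrib_left ac_simps)
    finally show "(\<Sum>y\<in>V. \<Sum>z\<in>V. g x y * g y z * g z x) = (\<Sum>z\<in>V. g z x * (\<Sum>y\<in>V. g x y * g y z))" .
  qed
  also have "\<dots> \<le> sqrt (\<Sum>x\<in>V. \<Sum>z\<in>V. (g z x)\<^sup>2) * sqrt (\<Sum>x\<in>V. \<Sum>y\<in>V. (g x y)\<^sup>2) * sqrt (\<Sum>y\<in>V. \<Sum>z\<in>V. (g y z)\<^sup>2)"
    using tri_cs[OF fin, of "\<lambda>u v. g v u" g g] by simp
  also have "\<dots> = sqrt G * sqrt G * sqrt G"
  proof -
    have e1: "(\<Sum>x\<in>V. \<Sum>z\<in>V. (g z x)\<^sup>2) = G"
      unfolding G_def g_def gr_def ind_sq by (rule sum.swap[symmetric])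
    have e2: "(\<Sum>x\<in>V. \<Sum>y\<in>V. (g x y)\<^sup>2) = G" unfolding G_def g_def gr_def ind_sq by simp
    show ?thesis using e1 e2 by simp
  qed
  finally have six: "6 * real (card (green_triangles V col)) \<le> sqrt G * sqrt G * sqrt G" .
  have n1: "1 \<le> real (card V)" using n2 by simp
  have Cpos: "0 < real (card V choose 2)" using n2 by (simp add: choose2_real)
  have g0: "0 \<le> \<gamma>"
  proof -
    have "0 \<le> \<gamma> * real (card V choose 2)" using green[symmetric] by simp
    then show ?thesis using Cpos by (simp add: zero_le_mult_iff)
  qed
  have G0: "0 \<le> G" using G g0 n1 by simp
  have "sqrt G * sqrt G * sqrt G = G * sqrt G" using G0 by simp
  also have "\<dots> \<le> \<gamma> * sqrt \<gamma> * real (card V) ^ 3" unfolding G by (rule final_bound[OF g0 n1])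
  finally show ?thesis using six powr32[OF g0] by simp
qed




lemma part2:
  fixes V :: "'a set" and col :: "'a \<Rightarrow> 'a \<Rightarrow> colour" and ar :: "'a \<Rightarrow> 'a \<Rightarrow> bool" and \<delta> :: real
  assumes fin: "finite V" and n2: "card V \<ge> 2" and valid: "valid_colouring V col ar"
    and purple: "real (card (col_pairs V col Purple)) = 2 * \<delta> * real (card V choose 2)"
  shows "real (card (purple_cyclic_triangles V col ar)) \<le> 2 * \<delta> powr (3/2) * real (card V) ^ 3 / 6"
proof -
  define g where "g = pu col ar"
  define h where "h = (\<lambda>(x,y,z). g x y * g y z * g z x)"
  have hnn: "\<forall>t\<in>V\<times>V\<times>V. 0 \<le> h t" by (auto simp: h_def g_def pu_def)
  have FV: "purple_cyclic_triangles V col ar \<subseteq> Pow V" by (auto simp: purple_cyclic_triangles_def)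
  have fib: "3 \<le> (\<Sum>t\<in>{t\<in>V\<times>V\<times>V. tset t = S}. h t)" if "S \<in> purple_cyclic_triangles V col ar" for S
  proof -
    from that obtain x y z where S: "S \<subseteq> V" "S = {x,y,z}" "x \<noteq> y" "y \<noteq> z" "x \<noteq> z"
      "col x y = Purple" "col y z = Purple" "col x z = Purple"
      "(ar x y \<and> ar y z \<and> ar z x) \<or> (ar y x \<and> ar z y \<and> ar x z)"
      unfolding purple_cyclic_triangles_def by blast
    have V: "x \<in> V" "y \<in> V" "z \<in> V" using S by auto
    have c2: "col y x = Purple" "col z y = Purple" "col z x = Purple"
      using S valid_sym[OF valid] V by metis+
    have six: "h (x,y,z) + h (x,z,y) + h (y,x,z) + h (y,z,x) + h (z,x,y) + h (z,y,x)
        \<le> (\<Sum>t\<in>{t\<in>V\<times>V\<times>V. tset t = {x,y,z}}. h t)"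
      by (rule fiber6[OF fin hnn V S(3-5)])
    have nn: "0 \<le> h (x,y,z)" "0 \<le> h (x,z,y)" "0 \<le> h (y,x,z)" "0 \<le> h (y,z,x)" "0 \<le> h (z,x,y)" "0 \<le> h (z,y,x)"
      using hnn V by auto
    have "3 \<le> h (x,y,z) + h (x,z,y) + h (y,x,z) + h (y,z,x) + h (z,x,y) + h (z,y,x)"
      using S(9)
    proof
      assume a: "ar x y \<and> ar y z \<and> ar z x"
      have "h (x,y,z) = 1" "h (y,z,x) = 1" "h (z,x,y) = 1"
        using a S c2 by (auto simp: h_def g_def pu_def ind_def)
      then show ?thesis using nn by linarith
    next
      assume a: "ar y x \<and> ar z y \<and> ar x z"
      have "h (x,z,y) = 1" "h (z,y,x) = 1" "h (y,x,z) = 1"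
        using a S c2 by (auto simp: h_def g_def pu_def ind_def)
      then show ?thesis using nn by linarith
    qed
    then show ?thesis using six S by simp
  qed
  define G where "G = (\<Sum>x\<in>V. \<Sum>y\<in>V. g x y)"
  have G: "G = \<delta> * (real (card V) * (real (card V) - 1))"
    using cnt_or[OF fin valid, of Purple] purple unfolding G_def g_def pu_def
    by (simp add: choose2_real)
  have "3 * real (card (purple_cyclic_triangles V col ar)) = (\<Sum>S\<in>purple_cyclic_triangles V col ar. 3)" by simp
  also have "\<dots> \<le> (\<Sum>S\<in>purple_cyclic_triangles V col ar. \<Sum>t\<in>{t\<in>V\<times>V\<times>V. tset t = S}. h t)"
    by (rule sum_mono) (rule fib)
  also have "\<dots> \<le> (\<Sum>t\<in>V\<times>V\<times>V. h t)" by (rule fiber_sum[OF fin FV hnn])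
  also have "\<dots> = (\<Sum>x\<in>V. \<Sum>y\<in>V. \<Sum>z\<in>V. g x y * g y z * g z x)" by (simp add: sum3 h_def)
  also have "\<dots> = (\<Sum>x\<in>V. \<Sum>z\<in>V. g z x * (\<Sum>y\<in>V. g x y * g y z))"
  proof (rule sum.cong[OF refl])
    fix x assume "x \<in> V"
    have "(\<Sum>y\<in>V. \<Sum>z\<in>V. g x y * g y z * g z x) = (\<Sum>z\<in>V. \<Sum>y\<in>V. g x y * g y z * g z x)"
      by (rule sum.swap)
    also have "\<dots> = (\<Sum>z\<in>V. g z x * (\<Sum>y\<in>V. g x y * g y z))"
      by (simp add: sum_distrib_left ac_simps)
    finally show "(\<Sum>y\<in>V. \<Sum>z\<in>V. g x y * g y z * g z x) = (\<Sum>z\<in>V. g z x * (\<Sum>y\<in>V. g x y * g y z))" .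
  qed
  also have "\<dots> \<le> sqrt (\<Sum>x\<in>V. \<Sum>z\<in>V. (g z x)\<^sup>2) * sqrt (\<Sum>x\<in>V. \<Sum>y\<in>V. (g x y)\<^sup>2) * sqrt (\<Sum>y\<in>V. \<Sum>z\<in>V. (g y z)\<^sup>2)"
    using tri_cs[OF fin, of "\<lambda>u v. g v u" g g] by simp
  also have "\<dots> = sqrt G * sqrt G * sqrt G"
  proof -
    have e1: "(\<Sum>x\<in>V. \<Sum>z\<in>V. (g z x)\<^sup>2) = G"
      unfolding G_def g_def pu_def ind_sq by (rule sum.swap[symmetric])
    have e2: "(\<Sum>x\<in>V. \<Sum>y\<in>V. (g x y)\<^sup>2) = G" unfolding G_def g_def pu_def ind_sq by simp
    show ?thesis using e1 e2 by simp
  qed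
  finally have three: "3 * real (card (purple_cyclic_triangles V col ar)) \<le> sqrt G * sqrt G * sqrt G" .
  have n1: "1 \<le> real (card V)" using n2 by simp
  have Cpos: "0 < real (card V choose 2)" using n2 by (simp add: choose2_real)
  have g0: "0 \<le> \<delta>"
  proof -
    have "0 \<le> 2 * \<delta> * real (card V choose 2)" using purple[symmetric] by simp
    then show ?thesis using Cpos by (simp add: zero_le_mult_iff)
  qed
  have G0: "0 \<le> G" using G g0 n1 by simp
  have "sqrt G * sqrt G * sqrt G = G * sqrt G" using G0 by simp
  also have "\<dots> \<le> \<delta> * sqrt \<delta> * real (card V) ^ 3" unfolding G by (rule final_bound[OF g0 n1])
  finally show ?thesis using three powr32[OF g0] by simp
qed

lemma cherry_sum:
  fixes V :: "'a set" and col :: "'a \<Rightarrow> 'a \<Rightarrow> colour" and ar :: "'a \<Rightarrow> 'a \<Rightarrow> bool"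
  assumes fin: "finite V" and valid: "valid_colouring V col ar"
  shows "2 * real (card (cherries V col ar))
     \<le> (\<Sum>y\<in>V. \<Sum>z\<in>V. bl col y z * (\<Sum>x\<in>V. rd col ar y x * rd col ar z x))"
proof -
  define r where "r = rd col ar"
  define b where "b = bl col"
  define h where "h = (\<lambda>(x,y,z). r y x * r z x * b y z)"
  have hnn: "\<forall>t\<in>V\<times>V\<times>V. 0 \<le> h t" by (auto simp: h_def r_def b_def rd_def bl_def)
  have FV: "cherries V col ar \<subseteq> Pow V" by (auto simp: cherries_def)
  have fib: "2 \<le> (\<Sum>t\<in>{t\<in>V\<times>V\<times>V. tset t = S}. h t)" if "S \<in> cherries V col ar" for S
  proof -
    from that obtain x y z where S: "S \<subseteq> V" "S = {x,y,z}" "x \<noteq> y" "y \<noteq> z" "x \<noteq> z"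
      "col y z = Blue" "col x y = Red" "col x z = Red" "ar y x" "ar z x"
      unfolding cherries_def by blast
    have V: "x \<in> V" "y \<in> V" "z \<in> V" using S by auto
    have c2: "col z y = Blue" "col y x = Red" "col z x = Red"
      using S valid_sym[OF valid] V by metis+
    have six: "h (x,y,z) + h (x,z,y) + h (y,x,z) + h (y,z,x) + h (z,x,y) + h (z,y,x)
        \<le> (\<Sum>t\<in>{t\<in>V\<times>V\<times>V. tset t = {x,y,z}}. h t)"
      by (rule fiber6[OF fin hnn V S(3-5)])
    have nn: "0 \<le> h (x,y,z)" "0 \<le> h (x,z,y)" "0 \<le> h (y,x,z)" "0 \<le> h (y,z,x)" "0 \<le> h (z,x,y)" "0 \<le> h (z,y,x)"
      using hnn V by auto
    have "h (x,y,z) = 1" "h (x,z,y) = 1"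
      using S c2 by (auto simp: h_def r_def b_def rd_def bl_def ind_def)
    then show ?thesis using six S nn by simp
  qed
  have "2 * real (card (cherries V col ar)) = (\<Sum>S\<in>cherries V col ar. 2)" by simp
  also have "\<dots> \<le> (\<Sum>S\<in>cherries V col ar. \<Sum>t\<in>{t\<in>V\<times>V\<times>V. tset t = S}. h t)"
    by (rule sum_mono) (rule fib)
  also have "\<dots> \<le> (\<Sum>t\<in>V\<times>V\<times>V. h t)" by (rule fiber_sum[OF fin FV hnn])
  also have "\<dots> = (\<Sum>x\<in>V. \<Sum>y\<in>V. \<Sum>z\<in>V. r y x * r z x * b y z)" by (simp add: sum3 h_def)
  also have "\<dots> = (\<Sum>y\<in>V. \<Sum>z\<in>V. \<Sum>x\<in>V. r y x * r z x * b y z)"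
    by (rule rot3[of "\<lambda>y z x. r y x * r z x * b y z", symmetric])
  also have "\<dots> = (\<Sum>y\<in>V. \<Sum>z\<in>V. b y z * (\<Sum>x\<in>V. r y x * r z x))"
    by (simp add: sum_distrib_left ac_simps)
  finally show ?thesis unfolding r_def b_def by (simp add: ac_simps)
qed




lemma part36:
  fixes V :: "'a set" and col :: "'a \<Rightarrow> 'a \<Rightarrow> colour" and ar :: "'a \<Rightarrow> 'a \<Rightarrow> bool" and \<alpha> \<beta> :: real
  assumes fin: "finite V" and n2: "card V \<ge> 2" and valid: "valid_colouring V col ar"
    and red: "real (card (col_pairs V col Red)) = 2 * \<alpha> * real (card V choose 2)"
    and blue: "real (card (col_pairs V col Blue)) = \<beta> * real (card V choose 2)"
  shows "real (card (cherries V col ar)) \<le> 3 * \<alpha> * sqrt \<beta> * real (card V) ^ 3 / 6"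
    and "real (card (cherries V col ar))
      \<le> (if \<alpha> = 0 \<and> \<beta> = 0 then 0 else 3 * \<alpha> * \<beta> / (\<alpha> + \<beta>)) * real (card V) ^ 3 / 6"
proof -
  define n where "n = real (card V)"
  define m where "m = n * (n - 1)"
  define r where "r = rd col ar"
  define b where "b = bl col"
  have n1: "1 \<le> n" using n2 unfolding n_def by simp
  have m0: "0 < m" using n2 unfolding m_def n_def by simp
  have Cpos: "0 < real (card V choose 2)" using n2 by (simp add: choose2_real)
  have a0: "0 \<le> \<alpha>"
  proof -
    have "0 \<le> 2 * \<alpha> * real (card V choose 2)" using red[symmetric] by simp
    then show ?thesis using Cpos by (simp add: zero_le_mult_iff)
  qed
  have b0: "0 \<le> \<beta>"
  proof -
    have "0 \<le> \<beta> * real (card V choose 2)" using blue[symmetric] by simp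
    then show ?thesis using Cpos by (simp add: zero_le_mult_iff)
  qed
  have R: "(\<Sum>x\<in>V. \<Sum>y\<in>V. r x y) = \<alpha> * m"
    using cnt_or[OF fin valid, of Red] red unfolding r_def rd_def m_def n_def
    by (simp add: choose2_real)
  have B: "(\<Sum>x\<in>V. \<Sum>y\<in>V. b x y) = \<beta> * m"
    using cnt_col[OF fin valid, of Blue] blue unfolding b_def bl_def m_def n_def
    by (simp add: choose2_real)
  have CS: "2 * real (card (cherries V col ar)) \<le> (\<Sum>y\<in>V. \<Sum>z\<in>V. b y z * (\<Sum>x\<in>V. r y x * r z x))"
    using cherry_sum[OF fin valid] unfolding r_def b_def .
  show "real (card (cherries V col ar)) \<le> 3 * \<alpha> * sqrt \<beta> * real (card V) ^ 3 / 6"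
  proof -
    have "(\<Sum>y\<in>V. \<Sum>z\<in>V. b y z * (\<Sum>x\<in>V. r y x * r z x))
      \<le> sqrt (\<Sum>y\<in>V. \<Sum>z\<in>V. (b y z)\<^sup>2) * sqrt (\<Sum>y\<in>V. \<Sum>x\<in>V. (r y x)\<^sup>2) * sqrt (\<Sum>x\<in>V. \<Sum>z\<in>V. (r z x)\<^sup>2)"
      using tri_cs[OF fin, of b r "\<lambda>x z. r z x"] by simp
    also have "\<dots> = sqrt (\<beta> * m) * sqrt (\<alpha> * m) * sqrt (\<alpha> * m)"
    proof -
      have e1: "(\<Sum>y\<in>V. \<Sum>z\<in>V. (b y z)\<^sup>2) = \<beta> * m" using B unfolding b_def bl_def ind_sq .
      have e2: "(\<Sum>y\<in>V. \<Sum>x\<in>V. (r y x)\<^sup>2) = \<alpha> * m" using R unfolding r_def rd_def ind_sq .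
      have e3: "(\<Sum>x\<in>V. \<Sum>z\<in>V. (r z x)\<^sup>2) = \<alpha> * m"
      proof -
        have "(\<Sum>x\<in>V. \<Sum>z\<in>V. (r z x)\<^sup>2) = (\<Sum>z\<in>V. \<Sum>x\<in>V. (r z x)\<^sup>2)" by (rule sum.swap)
        also have "\<dots> = \<alpha> * m" using R unfolding r_def rd_def ind_sq .
        finally show ?thesis .
      qed
      show ?thesis using e1 e2 e3 by simp
    qed
    also have "\<dots> = \<alpha> * sqrt \<beta> * (m * sqrt m)"
      using a0 b0 m0 by (simp add: real_sqrt_mult ac_simps)
    also have "\<dots> \<le> \<alpha> * sqrt \<beta> * n ^ 3"
    proof -
      have "m * sqrt m \<le> n ^ 3" using final_bound[of 1 n] n1 unfolding m_def by simp
      then show ?thesis by (rule mult_left_mono) (use a0 b0 in simp)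
    qed
    finally have "2 * real (card (cherries V col ar)) \<le> \<alpha> * sqrt \<beta> * n ^ 3" using CS by linarith
    then show ?thesis unfolding n_def by simp
  qed
  show "real (card (cherries V col ar))
      \<le> (if \<alpha> = 0 \<and> \<beta> = 0 then 0 else 3 * \<alpha> * \<beta> / (\<alpha> + \<beta>)) * real (card V) ^ 3 / 6"
  proof -
    define rr where "rr y = (\<Sum>x\<in>V. r y x)" for y
    define bb where "bb y = (\<Sum>z\<in>V. b y z)" for y
    have rnn: "0 \<le> r u v" "r u v \<le> 1" for u v by (auto simp: r_def rd_def)
    have bnn: "0 \<le> b u v" for u v by (auto simp: b_def bl_def)
    have rb1: "r u v + b u v \<le> 1" for u v by (auto simp: r_def rd_def b_def bl_def ind_def)
    have "(\<Sum>y\<in>V. \<Sum>z\<in>V. b y z * (\<Sum>x\<in>V. r y x * r z x)) \<le> (\<Sum>y\<in>V. \<Sum>z\<in>V. b y z * (\<Sum>x\<in>V. r y x))"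
    proof (intro sum_mono mult_left_mono bnn)
      fix y z x
      show "r y x * r z x \<le> r y x" using rnn[of y x] rnn[of z x] by (simp add: mult_left_le)
    qed
    also have "\<dots> = (\<Sum>y\<in>V. rr y * bb y)"
      unfolding rr_def bb_def by (simp add: sum_distrib_right ac_simps)
    also have "\<dots> \<le> (\<Sum>y\<in>V. n * hm (rr y) (bb y))"
    proof (rule sum_mono)
      fix y assume "y \<in> V"
      have "rr y + bb y = (\<Sum>x\<in>V. r y x + b y x)" unfolding rr_def bb_def by (simp add: sum.distrib)
      also have "\<dots> \<le> (\<Sum>x\<in>V. 1)" by (rule sum_mono) (rule rb1)
      finally have "rr y + bb y \<le> n" unfolding n_def by simp
      then show "rr y * bb y \<le> n * hm (rr y) (bb y)"
        by (intro hm_bound) (auto simp: rr_def bb_def intro!: sum_nonneg rnn bnn)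
    qed
    also have "\<dots> = n * (\<Sum>y\<in>V. hm (rr y) (bb y))" by (simp add: sum_distrib_left)
    also have "\<dots> \<le> n * hm (\<Sum>y\<in>V. rr y) (\<Sum>y\<in>V. bb y)"
      by (intro mult_left_mono hm_sum fin) (use n1 in \<open>auto simp: rr_def bb_def intro!: sum_nonneg rnn bnn\<close>)
    also have "hm (\<Sum>y\<in>V. rr y) (\<Sum>y\<in>V. bb y) = m * hm \<alpha> \<beta>"
    proof -
      have "(\<Sum>y\<in>V. rr y) = m * \<alpha>" using R unfolding rr_def by simp
      moreover have "(\<Sum>y\<in>V. bb y) = m * \<beta>" using B unfolding bb_def by simp
      ultimately show ?thesis using hm_mul[OF m0] by simp
    qed
    also have "n * (m * hm \<alpha> \<beta>) \<le> n ^ 3 * hm \<alpha> \<beta>"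
    proof -
      have "n * m \<le> n ^ 3" using n1 unfolding m_def by (simp add: power3_eq_cube algebra_simps)
      then show ?thesis using hm_nonneg[OF a0 b0] by (metis mult.assoc mult_right_mono)
    qed
    finally have "2 * real (card (cherries V col ar)) \<le> n ^ 3 * hm \<alpha> \<beta>" using CS by linarith
    moreover have "(if \<alpha> = 0 \<and> \<beta> = 0 then 0 else 3 * \<alpha> * \<beta> / (\<alpha> + \<beta>)) = 3 * hm \<alpha> \<beta>"
      using a0 b0 by (auto simp: hm_def)
    ultimately show ?thesis unfolding n_def by (simp add: mult.commute)
  qed
qed




lemma dist_sum:
  fixes F :: "'a \<Rightarrow> 'a \<Rightarrow> 'a \<Rightarrow> real"
  shows "(\<Sum>x\<in>V. \<Sum>y\<in>V. \<Sum>z\<in>V. if x \<noteq> y \<and> y \<noteq> z \<and> x \<noteq> z then c * (1 - F x y z) else 0)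
   = c * ((\<Sum>x\<in>V. \<Sum>y\<in>V. \<Sum>z\<in>V. if x \<noteq> y \<and> y \<noteq> z \<and> x \<noteq> z then 1 else 0)
        - (\<Sum>x\<in>V. \<Sum>y\<in>V. \<Sum>z\<in>V. if x \<noteq> y \<and> y \<noteq> z \<and> x \<noteq> z then F x y z else 0))"
proof -
  have pw: "(if P then c * (1 - f) else 0) = c * ((if P then 1 else 0) - (if P then f else 0))" for P and f :: real
    by simp
  show ?thesis unfolding pw by (simp add: sum_distrib_left sum_subtractf right_diff_distrib)
qed

lemma part4:
  fixes V :: "'a set" and col :: "'a \<Rightarrow> 'a \<Rightarrow> colour" and ar :: "'a \<Rightarrow> 'a \<Rightarrow> bool"
  assumes fin: "finite V" and n2: "card V \<ge> 2" and valid: "valid_colouring V col ar"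
  shows "real (card (cherries V col ar)) \<le> 0.465 * real (card V) ^ 3 / 6"
proof -
  define s :: real where "s = 72/125"
  define lam :: real where "lam = 93/200"
  define n where "n = real (card V)"
  define \<phi> where "\<phi> x y = rd col ar x y - s * bl col x y" for x y
  define D where "D x y z \<longleftrightarrow> x \<noteq> y \<and> y \<noteq> z \<and> x \<noteq> z" for x y z :: 'a
  define F where "F x y z = \<phi> x y * \<phi> x z + \<phi> y x * \<phi> y z + \<phi> z x * \<phi> z y" for x y z
  define h where "h = (\<lambda>(x,y,z). if D x y z then lam * (1 - F x y z) else 0)"
  have phi0: "\<forall>x. \<phi> x x = 0" by (simp add: \<phi>_def rd_def bl_def ind_def)
  have phi1: "\<forall>x y. (\<phi> x y)\<^sup>2 \<le> 1" by (auto simp: \<phi>_def rd_def bl_def ind_def s_def power2_eq_square)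
  have pk: "pok (\<phi> x y) (\<phi> y x)" if "x \<in> V" "y \<in> V" for x y
  proof (cases "x = y")
    case True then show ?thesis using phi0 by (simp add: pok_def)
  next
    case False
    have cs: "col y x = col x y" using valid_sym[OF valid that] .
    show ?thesis
    proof (cases "col x y")
      case Red
      then have "ar x y \<longleftrightarrow> \<not> ar y x" using valid_arc[OF valid that False] by simp
      then show ?thesis using Red cs False by (auto simp: pok_def \<phi>_def rd_def bl_def ind_def)
    qed (use cs False in \<open>auto simp: pok_def \<phi>_def rd_def bl_def ind_def s_def\<close>)
  qed
  have hnn: "\<forall>t\<in>V\<times>V\<times>V. 0 \<le> h t"
  proof
    fix t assume "t \<in> V\<times>V\<times>V"
    then obtain x y z where t: "t = (x,y,z)" "x \<in> V" "y \<in> V" "z \<in> V" by auto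
    have "F x y z \<le> 1" unfolding F_def by (rule cfg4[OF pk pk pk]) (use t in auto)
    then show "0 \<le> h t" using t by (simp add: h_def lam_def)
  qed
  have FV: "cherries V col ar \<subseteq> Pow V" by (auto simp: cherries_def)
  have fib: "6 \<le> (\<Sum>t\<in>{t\<in>V\<times>V\<times>V. tset t = S}. h t)" if "S \<in> cherries V col ar" for S
  proof -
    from that obtain x y z where S: "S \<subseteq> V" "S = {x,y,z}" "x \<noteq> y" "y \<noteq> z" "x \<noteq> z"
      "col y z = Blue" "col x y = Red" "col x z = Red" "ar y x" "ar z x"
      unfolding cherries_def by blast
    have V: "x \<in> V" "y \<in> V" "z \<in> V" using S by auto
    have c2: "col z y = Blue" "col y x = Red" "col z x = Red"
      using S valid_sym[OF valid] V by metis+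
    have na: "\<not> ar x y" "\<not> ar x z"
      using valid_arc[OF valid V(2) V(1)] valid_arc[OF valid V(3) V(1)] S c2 by auto
    have pv: "\<phi> y x = 1" "\<phi> x y = 0" "\<phi> z x = 1" "\<phi> x z = 0" "\<phi> y z = - s" "\<phi> z y = - s"
      using S c2 na by (auto simp: \<phi>_def rd_def bl_def ind_def)
    have six: "h (x,y,z) + h (x,z,y) + h (y,x,z) + h (y,z,x) + h (z,x,y) + h (z,y,x)
        \<le> (\<Sum>t\<in>{t\<in>V\<times>V\<times>V. tset t = {x,y,z}}. h t)"
      by (rule fiber6[OF fin hnn V S(3-5)])
    have "h (x,y,z) + h (x,z,y) + h (y,x,z) + h (y,z,x) + h (z,x,y) + h (z,y,x) = 6 * (lam * (1 + 2 * s))"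
      using S(3-5) pv by (simp add: h_def D_def F_def algebra_simps)
    also have "\<dots> \<ge> 6" by (simp add: lam_def s_def)
    finally show ?thesis using six S by simp
  qed
  have "6 * real (card (cherries V col ar)) = (\<Sum>S\<in>cherries V col ar. 6)" by simp
  also have "\<dots> \<le> (\<Sum>S\<in>cherries V col ar. \<Sum>t\<in>{t\<in>V\<times>V\<times>V. tset t = S}. h t)"
    by (rule sum_mono) (rule fib)
  also have "\<dots> \<le> (\<Sum>t\<in>V\<times>V\<times>V. h t)" by (rule fiber_sum[OF fin FV hnn])
  also have "\<dots> = (\<Sum>x\<in>V. \<Sum>y\<in>V. \<Sum>z\<in>V. if x \<noteq> y \<and> y \<noteq> z \<and> x \<noteq> z then lam * (1 - F x y z) else 0)"
    by (simp add: sum3 h_def D_def)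
  also have "\<dots> = lam * ((\<Sum>x\<in>V. \<Sum>y\<in>V. \<Sum>z\<in>V. if x \<noteq> y \<and> y \<noteq> z \<and> x \<noteq> z then 1 else 0)
        - (\<Sum>x\<in>V. \<Sum>y\<in>V. \<Sum>z\<in>V. if x \<noteq> y \<and> y \<noteq> z \<and> x \<noteq> z then F x y z else 0))"
    by (rule dist_sum)
  also have "\<dots> \<le> lam * (n * (n - 1) * (n - 2) + 3 * (n * (n - 1)))"
  proof -
    have q: "-3 * (n * (n - 1)) \<le> (\<Sum>x\<in>V. \<Sum>y\<in>V. \<Sum>z\<in>V. if x \<noteq> y \<and> y \<noteq> z \<and> x \<noteq> z then F x y z else 0)"
      using quad_bound[OF fin phi0 phi1] unfolding F_def n_def .
    have c: "(\<Sum>x\<in>V. \<Sum>y\<in>V. \<Sum>z\<in>V. if x \<noteq> y \<and> y \<noteq> z \<and> x \<noteq> z then 1 else 0) = n * (n - 1) * (n - 2)"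
      using count3[OF fin] unfolding n_def .
    show ?thesis using q c by (intro mult_left_mono) (auto simp: lam_def)
  qed
  also have "\<dots> \<le> lam * n ^ 3"
    using n2 unfolding n_def by (intro mult_left_mono) (auto simp: lam_def power3_eq_cube algebra_simps)
  finally show ?thesis unfolding lam_def n_def by simp
qed




lemma part5:
  fixes V :: "'a set" and col :: "'a \<Rightarrow> 'a \<Rightarrow> colour" and ar :: "'a \<Rightarrow> 'a \<Rightarrow> bool"
  assumes fin: "finite V" and n2: "card V \<ge> 2" and valid: "valid_colouring V col ar"
  shows "real (card (purple_cyclic_triangles V col ar))
      + 1/4 * (real (card (green_triangles V col)) + real (card (cherries V col ar)))
      \<le> 1/4 * real (card V) ^ 3 / 6"
proof -
  define n where "n = real (card V)"
  define e where "e x y = pu col ar x y - pu col ar y x" for x y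
  define D where "D x y z \<longleftrightarrow> x \<noteq> y \<and> y \<noteq> z \<and> x \<noteq> z" for x y z :: 'a
  define F where "F x y z = e x y * e x z + e y x * e y z + e z x * e z y" for x y z
  define h where "h = (\<lambda>(x,y,z). if D x y z then 1 * (1 - F x y z) else 0)"
  define Fp where "Fp = purple_cyclic_triangles V col ar"
  define Fg where "Fg = green_triangles V col"
  define Fc where "Fc = cherries V col ar"
  define fib where "fib S = (\<Sum>t\<in>{t\<in>V\<times>V\<times>V. tset t = S}. h t)" for S
  have e0: "\<forall>x. e x x = 0" by (simp add: e_def)
  have eanti: "e y x = - e x y" for x y by (simp add: e_def)
  have evals: "e x y \<in> {-1, 0, 1}" for x y by (auto simp: e_def pu_def ind_def)
  have e1: "\<forall>x y. (e x y)\<^sup>2 \<le> 1"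
  proof (intro allI)
    fix x y
    from evals[of x y] show "(e x y)\<^sup>2 \<le> 1" by (auto simp: power2_eq_square)
  qed
  have hnn: "\<forall>t\<in>V\<times>V\<times>V. 0 \<le> h t"
  proof
    fix t assume "t \<in> V\<times>V\<times>V"
    then obtain x y z where t: "t = (x,y,z)" by auto
    have "F x y z \<le> 1" unfolding F_def by (rule cfg5[OF eanti eanti eanti evals evals evals])
    then show "0 \<le> h t" using t by (simp add: h_def)
  qed
  have finP: "finite (Pow V)" using fin by simp
  have FpV: "Fp \<subseteq> Pow V" by (auto simp: Fp_def purple_cyclic_triangles_def)
  have FgV: "Fg \<subseteq> Pow V" by (auto simp: Fg_def green_triangles_def)
  have FcV: "Fc \<subseteq> Pow V" by (auto simp: Fc_def cherries_def)
  have fFp: "finite Fp" using FpV finP by (rule rev_finite_subset[rotated])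
  have fFg: "finite Fg" using FgV finP by (rule rev_finite_subset[rotated])
  have fFc: "finite Fc" using FcV finP by (rule rev_finite_subset[rotated])
  have fibp: "24 \<le> fib S" if "S \<in> Fp" for S
  proof -
    from that obtain x y z where S: "S \<subseteq> V" "S = {x,y,z}" "x \<noteq> y" "y \<noteq> z" "x \<noteq> z"
      "col x y = Purple" "col y z = Purple" "col x z = Purple"
      "(ar x y \<and> ar y z \<and> ar z x) \<or> (ar y x \<and> ar z y \<and> ar x z)"
      unfolding Fp_def purple_cyclic_triangles_def by blast
    have V: "x \<in> V" "y \<in> V" "z \<in> V" using S by auto
    have c2: "col y x = Purple" "col z y = Purple" "col z x = Purple"
      using S valid_sym[OF valid] V by metis+
    have xo: "ar x y \<longleftrightarrow> \<not> ar y x" "ar y z \<longleftrightarrow> \<not> ar z y" "ar z x \<longleftrightarrow> \<not> ar x z"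
      using valid_arc[OF valid V(1) V(2)] valid_arc[OF valid V(2) V(3)] valid_arc[OF valid V(3) V(1)] S c2
      by auto
    have six: "h (x,y,z) + h (x,z,y) + h (y,x,z) + h (y,z,x) + h (z,x,y) + h (z,y,x)
        \<le> fib {x,y,z}"
      unfolding fib_def by (rule fiber6[OF fin hnn V S(3-5)])
    have "h (x,y,z) + h (x,z,y) + h (y,x,z) + h (y,z,x) + h (z,x,y) + h (z,y,x) = 24"
      using S(9)
    proof
      assume a: "ar x y \<and> ar y z \<and> ar z x"
      have ev: "e x y = 1" "e y z = 1" "e z x = 1" "e y x = -1" "e z y = -1" "e x z = -1"
        using a xo S c2 by (auto simp: e_def pu_def ind_def)
      show ?thesis using S(3-5) ev by (simp add: h_def D_def F_def)
    next
      assume a: "ar y x \<and> ar z y \<and> ar x z"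
      have ev: "e x y = -1" "e y z = -1" "e z x = -1" "e y x = 1" "e z y = 1" "e x z = 1"
        using a xo S c2 by (auto simp: e_def pu_def ind_def)
      show ?thesis using S(3-5) ev by (simp add: h_def D_def F_def)
    qed
    then show ?thesis using six S by simp
  qed
  have fib_np: "6 \<le> fib {x,y,z}"
    if V: "x \<in> V" "y \<in> V" "z \<in> V" and d: "x \<noteq> y" "y \<noteq> z" "x \<noteq> z"
      and np: "col x y \<noteq> Purple" "col y z \<noteq> Purple" "col x z \<noteq> Purple" for x y z
  proof -
    have c2: "col y x \<noteq> Purple" "col z y \<noteq> Purple" "col z x \<noteq> Purple"
      using np valid_sym[OF valid] V by metis+
    have ev: "e x y = 0" "e y z = 0" "e z x = 0" "e y x = 0" "e z y = 0" "e x z = 0"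
      using np c2 by (auto simp: e_def pu_def ind_def)
    have six: "h (x,y,z) + h (x,z,y) + h (y,x,z) + h (y,z,x) + h (z,x,y) + h (z,y,x)
        \<le> fib {x,y,z}"
      unfolding fib_def by (rule fiber6[OF fin hnn V d])
    have "h (x,y,z) + h (x,z,y) + h (y,x,z) + h (y,z,x) + h (z,x,y) + h (z,y,x) = 6"
      using d ev by (simp add: h_def D_def F_def)
    then show ?thesis using six by simp
  qed
  have fibg: "6 \<le> fib S" if "S \<in> Fg" for S
  proof -
    from that have S: "S \<subseteq> V" "card S = 3" "\<forall>x\<in>S. \<forall>y\<in>S. x \<noteq> y \<longrightarrow> col x y = Green"
      by (auto simp: Fg_def green_triangles_def)
    then obtain x y z where xyz: "S = {x,y,z}" "x \<noteq> y" "y \<noteq> z" "x \<noteq> z" by (auto simp: card_3_iff)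
    have V: "x \<in> V" "y \<in> V" "z \<in> V" using S xyz by auto
    have "col x y = Green" "col y z = Green" "col x z = Green" using S(3) xyz by auto
    then show ?thesis using fib_np[OF V xyz(2-4)] xyz by simp
  qed
  have fibc: "6 \<le> fib S" if "S \<in> Fc" for S
  proof -
    from that obtain x y z where S: "S \<subseteq> V" "S = {x,y,z}" "x \<noteq> y" "y \<noteq> z" "x \<noteq> z"
      "col y z = Blue" "col x y = Red" "col x z = Red"
      unfolding Fc_def cherries_def by blast
    have V: "x \<in> V" "y \<in> V" "z \<in> V" using S by auto
    show ?thesis using fib_np[OF V S(3-5)] S by simp
  qed
  have dpg: "Fp \<inter> Fg = {}"
  proof (rule ccontr)
    assume "Fp \<inter> Fg \<noteq> {}"
    then obtain S where "S \<in> Fp" "S \<in> Fg" by blast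
    then obtain x y z where "S = {x,y,z}" "x \<noteq> y" "col x y = Purple"
      "\<forall>x\<in>S. \<forall>y\<in>S. x \<noteq> y \<longrightarrow> col x y = Green"
      unfolding Fp_def Fg_def purple_cyclic_triangles_def green_triangles_def by blast
    then show False by auto
  qed
  have dgc: "Fg \<inter> Fc = {}"
  proof (rule ccontr)
    assume "Fg \<inter> Fc \<noteq> {}"
    then obtain S where "S \<in> Fc" "S \<in> Fg" by blast
    then obtain x y z where "S = {x,y,z}" "x \<noteq> y" "col x y = Red"
      "\<forall>x\<in>S. \<forall>y\<in>S. x \<noteq> y \<longrightarrow> col x y = Green"
      unfolding Fc_def Fg_def cherries_def green_triangles_def by blast
    then show False by auto
  qed
  have dpc: "Fp \<inter> Fc = {}"
  proof (rule ccontr)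
    assume "Fp \<inter> Fc \<noteq> {}"
    then obtain S where Sp: "S \<in> Fp" and Sc: "S \<in> Fc" by blast
    from Sp obtain x y z where S: "S \<subseteq> V" "S = {x,y,z}"
      "col x y = Purple" "col y z = Purple" "col x z = Purple"
      unfolding Fp_def purple_cyclic_triangles_def by blast
    have V: "x \<in> V" "y \<in> V" "z \<in> V" using S by auto
    have c2: "col y x = Purple" "col z y = Purple" "col z x = Purple"
      using S valid_sym[OF valid] V by metis+
    from Sc obtain u v w where "S = {u,v,w}" "u \<noteq> v" "col u v = Red"
      unfolding Fc_def cherries_def by blast
    then have "u \<in> {x,y,z}" "v \<in> {x,y,z}" "u \<noteq> v" "col u v = Red" using S by auto
    then show False using S c2 by auto
  qed
  have "24 * real (card Fp) + 6 * real (card Fg) + 6 * real (card Fc)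
      = (\<Sum>S\<in>Fp. 24) + (\<Sum>S\<in>Fg. 6) + (\<Sum>S\<in>Fc. 6)" by simp
  also have "\<dots> \<le> (\<Sum>S\<in>Fp. fib S) + (\<Sum>S\<in>Fg. fib S) + (\<Sum>S\<in>Fc. fib S)"
    by (intro add_mono sum_mono fibp fibg fibc)
  also have "\<dots> = (\<Sum>S\<in>Fp \<union> Fg \<union> Fc. fib S)"
  proof -
    have "(\<Sum>S\<in>Fp \<union> Fg. fib S) = (\<Sum>S\<in>Fp. fib S) + (\<Sum>S\<in>Fg. fib S)"
      by (rule sum.union_disjoint[OF fFp fFg dpg])
    moreover have "(\<Sum>S\<in>(Fp \<union> Fg) \<union> Fc. fib S) = (\<Sum>S\<in>Fp \<union> Fg. fib S) + (\<Sum>S\<in>Fc. fib S)"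
      by (rule sum.union_disjoint) (use fFp fFg fFc dpc dgc in auto)
    ultimately show ?thesis by simp
  qed
  also have "\<dots> \<le> (\<Sum>t\<in>V\<times>V\<times>V. h t)"
    unfolding fib_def by (rule fiber_sum[OF fin _ hnn]) (use FpV FgV FcV in auto)
  also have "\<dots> = (\<Sum>x\<in>V. \<Sum>y\<in>V. \<Sum>z\<in>V. if x \<noteq> y \<and> y \<noteq> z \<and> x \<noteq> z then 1 * (1 - F x y z) else 0)"
    by (simp add: sum3 h_def D_def)
  also have "\<dots> = 1 * ((\<Sum>x\<in>V. \<Sum>y\<in>V. \<Sum>z\<in>V. if x \<noteq> y \<and> y \<noteq> z \<and> x \<noteq> z then 1 else 0)
        - (\<Sum>x\<in>V. \<Sum>y\<in>V. \<Sum>z\<in>V. if x \<noteq> y \<and> y \<noteq> z \<and> x \<noteq> z then F x y z else 0))"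
    by (rule dist_sum)
  also have "\<dots> \<le> n * (n - 1) * (n - 2) + 3 * (n * (n - 1))"
  proof -
    have q: "-3 * (n * (n - 1)) \<le> (\<Sum>x\<in>V. \<Sum>y\<in>V. \<Sum>z\<in>V. if x \<noteq> y \<and> y \<noteq> z \<and> x \<noteq> z then F x y z else 0)"
      using quad_bound[OF fin e0 e1] unfolding F_def n_def .
    have c: "(\<Sum>x\<in>V. \<Sum>y\<in>V. \<Sum>z\<in>V. if x \<noteq> y \<and> y \<noteq> z \<and> x \<noteq> z then 1 else 0) = n * (n - 1) * (n - 2)"
      using count3[OF fin] unfolding n_def .
    show ?thesis using q c by simp
  qed
  also have "\<dots> \<le> n ^ 3"
    using n2 unfolding n_def by (auto simp: power3_eq_cube algebra_simps)
  finally have "24 * real (card Fp) + 6 * real (card Fg) + 6 * real (card Fc) \<le> n ^ 3" .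
  then show ?thesis unfolding Fp_def Fg_def Fc_def n_def by (simp add: field_simps)
qed


theorem lemma5p1:
  fixes V :: "'a set" and col :: "'a \<Rightarrow> 'a \<Rightarrow> colour" and arc :: "'a \<Rightarrow> 'a \<Rightarrow> bool"
    and \<alpha> \<beta> \<gamma> \<delta> :: real
  assumes fin: "finite V" and n2: "card V \<ge> 2"
    and valid: "valid_colouring V col arc"
    and red: "real (card (col_pairs V col Red)) = 2 * \<alpha> * real (card V choose 2)"
    and blue: "real (card (col_pairs V col Blue)) = \<beta> * real (card V choose 2)"
    and green: "real (card (col_pairs V col Green)) = \<gamma> * real (card V choose 2)"
    and purple: "real (card (col_pairs V col Purple)) = 2 * \<delta> * real (card V choose 2)"
  shows
   "real (card (green_triangles V col)) \<le> \<gamma> powr (3/2) * real (card V) ^ 3 / 6 \<and>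
    real (card (purple_cyclic_triangles V col arc)) \<le> 2 * \<delta> powr (3/2) * real (card V) ^ 3 / 6 \<and>
    real (card (cherries V col arc)) \<le> 3 * \<alpha> * sqrt \<beta> * real (card V) ^ 3 / 6 \<and>
    real (card (cherries V col arc)) \<le> 0.465 * real (card V) ^ 3 / 6 \<and>
    real (card (purple_cyclic_triangles V col arc))
      + 1/4 * (real (card (green_triangles V col)) + real (card (cherries V col arc)))
      \<le> 1/4 * real (card V) ^ 3 / 6 \<and>
    real (card (cherries V col arc))
      \<le> (if \<alpha> = 0 \<and> \<beta> = 0 then 0 else 3 * \<alpha> * \<beta> / (\<alpha> + \<beta>)) * real (card V) ^ 3 / 6"
proof -
  note p36 = part36[OF fin n2 valid red blue]
  show ?thesis
    using part1[OF fin n2 valid green] part2[OF fin n2 valid purple] p36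
      part4[OF fin n2 valid] part5[OF fin n2 valid] by blast
qed

end
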